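(* Let $n\ge 2$, let $m\ge3$ be odd, let $\mathcal{A}$ be an $m$th order $n$-dimensional complete Hankel tensor, and let $x=(x_1,\dots,x_n)^\top$ be a Z-eigenvector of $\mathcal{A}$ associated with a Z-eigenvalue $\lambda$. If $\lambda>0$, then $x_i\ge0$ for all odd $i$ and $x_1>0$; if $\lambda<0$, then $x_i\le 0$ for all odd $i$ and $x_1<0$.
   Context: A complete Hankel tensor is a tensor of the form $\mathcal{A}=\sum_{k=1}^r\alpha_k(u_k)^m$ with $\alpha_k>0$, $u_k=(1,u_k,u_k^2,\dots,u_k^{n-1})^\top$ for pairwise distinct reals $u_1,\dots,u_r$, where $w^m$ denotes the tensor with entries $w_{i_1}\cdots w_{i_m}$. For $\mathcal{A}=(a_{i_1\cdots i_m})$ and $x\in\mathbb{R}^n$, $\mathcal{A}x^{m-1}$ is the vector with $i$th component $\sum_{i_2,\dots,i_m=1}^n a_{ii_2\cdots i_m}x_{i_2}\cdots x_{i_m}$. A real $\lambda$ is a Z-eigenvalue with Z-eigenvector $x\in\mathbb{R}^n$ if $x^\top x=1$ and $\mathcal{A}x^{m-1}=\lambda x$. *)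

theory Defs
  imports "HOL-Analysis.Analysis"
begin

text \<open>Tensors of order m and dimension n are functions on index lists of length m
  with entries in {0..<n} (0-based; paper index i corresponds to i-1 here).
  Vectors in R^n are functions nat => real, only the values below n matter.\<close>

definition tensor_indices :: "nat \<Rightarrow> nat \<Rightarrow> nat list set" where
  "tensor_indices n k = {is. length is = k \<and> set is \<subseteq> {..<n}}"

definition complete_hankel :: "nat \<Rightarrow> nat \<Rightarrow> (nat list \<Rightarrow> real) \<Rightarrow> bool" where
  "complete_hankel n m A \<longleftrightarrow>
     (\<exists>r (\<alpha>::nat \<Rightarrow> real) (u::nat \<Rightarrow> real).
        (\<forall>k<r. \<alpha> k > 0) \<and> inj_on u {..<r} \<and>
        (\<forall>is\<in>tensor_indices n m.
           A is = (\<Sum>k<r. \<alpha> k * prod_list (map (\<lambda>i. u k ^ i) is))))"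

definition tensor_apply :: "nat \<Rightarrow> nat \<Rightarrow> (nat list \<Rightarrow> real) \<Rightarrow> (nat \<Rightarrow> real) \<Rightarrow> nat \<Rightarrow> real" where
  "tensor_apply n m A x i =
     (\<Sum>is\<in>tensor_indices n (m - 1). A (i # is) * prod_list (map x is))"

definition Z_eigenpair :: "nat \<Rightarrow> nat \<Rightarrow> (nat list \<Rightarrow> real) \<Rightarrow> real \<Rightarrow> (nat \<Rightarrow> real) \<Rightarrow> bool" where
  "Z_eigenpair n m A lam x \<longleftrightarrow>
     (\<Sum>i<n. x i ^ 2) = 1 \<and> (\<forall>i<n. tensor_apply n m A x i = lam * x i)"

end

theory Submission
  imports Defs
begin

lemma ti_zero: "tensor_indices n 0 = {[]}"
  unfolding tensor_indices_def by auto

lemma ti_suc: "tensor_indices n (Suc d) = (\<lambda>(j,is). j#is) ` ({..<n} \<times> tensor_indices n d)"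
proof (rule set_eqI)
  fix xs :: "nat list"
  show "xs \<in> tensor_indices n (Suc d) \<longleftrightarrow> xs \<in> (\<lambda>(j,is). j#is) ` ({..<n} \<times> tensor_indices n d)"
    unfolding tensor_indices_def by (cases xs) auto
qed

lemma ti_finite: "finite (tensor_indices n d)"
  by (induction d) (auto simp: ti_zero ti_suc)

lemma sum_tensor: "(\<Sum>is\<in>tensor_indices n d. prod_list (map f is)) = (\<Sum>j<n. (f j :: real))^d"
proof (induction d)
  case 0 then show ?case by (simp add: ti_zero)
next
  case (Suc d)
  have inj: "inj_on (\<lambda>(j,is). j#is) ({..<n} \<times> tensor_indices n d)"
    by (auto simp: inj_on_def)
  have "(\<Sum>is\<in>tensor_indices n (Suc d). prod_list (map f is))
      = (\<Sum>p\<in>{..<n} \<times> tensor_indices n d. prod_list (map f (fst p # snd p)))"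
    unfolding ti_suc by (subst sum.reindex[OF inj]) (auto intro!: sum.cong)
  also have "\<dots> = (\<Sum>j<n. \<Sum>is\<in>tensor_indices n d. f j * prod_list (map f is))"
    by (subst sum.cartesian_product') (simp only: fst_conv snd_conv list.map prod_list.Cons)
  also have "\<dots> = (\<Sum>j<n. f j) * (\<Sum>is\<in>tensor_indices n d. prod_list (map f is))"
    by (rule sum_product[symmetric])
  finally show ?case using Suc by simp
qed

lemma prod_list_mult: "prod_list (map f is) * prod_list (map g is) = prod_list (map (\<lambda>j. (f j::real) * g j) is)"
  by (induction "is") (auto simp: algebra_simps)

lemma apply_formula:
  assumes "\<forall>is\<in>tensor_indices n m. A is = (\<Sum>k<r. \<alpha> k * prod_list (map (\<lambda>i. u k ^ i) is))"
    and "m \<ge> 1" and "i < n"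
  shows "tensor_apply n m A x i = (\<Sum>k<r. \<alpha> k * u k ^ i * (\<Sum>j<n. u k ^ j * x j) ^ (m - 1))"
proof -
  have mem: "i # is \<in> tensor_indices n m" if "is \<in> tensor_indices n (m-1)" for "is"
    using that assms(2,3) unfolding tensor_indices_def by auto
  have "tensor_apply n m A x i = (\<Sum>is\<in>tensor_indices n (m - 1).
      \<Sum>k<r. \<alpha> k * u k ^ i * prod_list (map (\<lambda>j. u k ^ j * x j) is))"
    unfolding tensor_apply_def
  proof (rule sum.cong[OF refl])
    fix "is" assume h: "is \<in> tensor_indices n (m - 1)"
    have "A (i # is) * prod_list (map x is)
        = (\<Sum>k<r. \<alpha> k * (u k ^ i * prod_list (map (\<lambda>j. u k ^ j) is))) * prod_list (map x is)"
      using assms(1)[rule_format, OF mem[OF h]] by simp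
    also have "\<dots> = (\<Sum>k<r. \<alpha> k * u k ^ i * (prod_list (map (\<lambda>j. u k ^ j) is) * prod_list (map x is)))"
      unfolding sum_distrib_right by (rule sum.cong) (simp_all add: mult.assoc)
    also have "\<dots> = (\<Sum>k<r. \<alpha> k * u k ^ i * prod_list (map (\<lambda>j. u k ^ j * x j) is))"
      by (simp only: prod_list_mult)
    finally show "A (i # is) * prod_list (map x is) = (\<Sum>k<r. \<alpha> k * u k ^ i * prod_list (map (\<lambda>j. u k ^ j * x j) is))" .
  qed
  also have "\<dots> = (\<Sum>k<r. \<alpha> k * u k ^ i * (\<Sum>is\<in>tensor_indices n (m - 1). prod_list (map (\<lambda>j. u k ^ j * x j) is)))"
    by (subst sum.swap) (simp add: sum_distrib_left)
  finally show ?thesis by (simp add: sum_tensor)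
qed

theorem proposition5:
  fixes n m :: nat and A :: "nat list \<Rightarrow> real" and lam :: real and x :: "nat \<Rightarrow> real"
  assumes "n \<ge> 2" and "m \<ge> 3" and "odd m"
    and "complete_hankel n m A"
    and "Z_eigenpair n m A lam x"
  shows "(lam > 0 \<longrightarrow> (\<forall>i<n. even i \<longrightarrow> x i \<ge> 0) \<and> x 0 > 0) \<and>
         (lam < 0 \<longrightarrow> (\<forall>i<n. even i \<longrightarrow> x i \<le> 0) \<and> x 0 < 0)"
proof -
  obtain r :: nat and \<alpha> :: "nat \<Rightarrow> real" and u :: "nat \<Rightarrow> real" where inj: "inj_on u {..<r}" and apos: "\<forall>k<r. \<alpha> k > (0::real)" and
    hA: "\<forall>is\<in>tensor_indices n m. A is = (\<Sum>k<r. \<alpha> k * prod_list (map (\<lambda>i. u k ^ i) is))"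
    using assms(4) unfolding complete_hankel_def by (elim exE conjE) (rule that; assumption)
  have norm: "(\<Sum>i<n. x i ^ 2) = 1" and eig: "\<And>i. i < n \<Longrightarrow> tensor_apply n m A x i = lam * x i"
    using assms(5) unfolding Z_eigenpair_def by auto
  define s where "s k = (\<Sum>j<n. u k ^ j * x j)" for k
  have ev: "even (m - 1)" using assms(3) by simp
  have form: "lam * x i = (\<Sum>k<r. \<alpha> k * u k ^ i * s k ^ (m - 1))" if "i < n" for i
  proof -
    have "tensor_apply n m A x i = (\<Sum>k<r. \<alpha> k * u k ^ i * s k ^ (m - 1))"
      unfolding s_def by (rule apply_formula[OF hA]) (use assms(2) that in auto)
    thus ?thesis using eig[OF that] by simp
  qed
  have term_nonneg: "\<alpha> k * u k ^ i * s k ^ (m - 1) \<ge> 0" if "k < r" "even i" for k i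
  proof -
    have "\<alpha> k \<ge> 0" using apos that(1) by (simp add: less_imp_le)
    moreover have "u k ^ i \<ge> 0" using that(2) by (rule zero_le_even_power)
    moreover have "s k ^ (m - 1) \<ge> 0" using ev by (rule zero_le_even_power)
    ultimately show ?thesis by simp
  qed
  have nonneg: "lam * x i \<ge> 0" if "i < n" "even i" for i
    unfolding form[OF that(1)] by (rule sum_nonneg) (use term_nonneg that(2) in simp)
  have x0: "lam * x 0 \<noteq> 0" if "lam \<noteq> 0"
  proof
    assume h: "lam * x 0 = 0"
    have S0: "(\<Sum>k<r. \<alpha> k * u k ^ 0 * s k ^ (m - 1)) = 0"
      using form[of 0] assms(1) h by linarith
    have NN: "\<And>k. k \<in> {..<r} \<Longrightarrow> \<alpha> k * u k ^ 0 * s k ^ (m - 1) \<ge> 0"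
    proof -
      fix k assume "k \<in> {..<r}"
      then have "k < r" by (simp only: lessThan_iff)
      moreover have "even (0::nat)" by simp
      ultimately show "\<alpha> k * u k ^ 0 * s k ^ (m - 1) \<ge> 0" by (rule term_nonneg)
    qed
    have all0: "\<forall>k\<in>{..<r}. \<alpha> k * u k ^ 0 * s k ^ (m - 1) = 0"
      using sum_nonneg_eq_0_iff[of "{..<r}" "\<lambda>k. \<alpha> k * u k ^ 0 * s k ^ (m - 1)", OF finite_lessThan NN] S0 by blast
    have sk: "s k ^ (m - 1) = 0" if "k < r" for k
    proof -
      have "\<alpha> k * u k ^ 0 * s k ^ (m - 1) = 0" using all0 that by blast
      moreover have "\<alpha> k \<noteq> 0" using apos that by force
      ultimately show ?thesis by simp
    qed
    have xi: "x i = 0" if "i < n" for i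
    proof -
      have "(\<Sum>k<r. \<alpha> k * u k ^ i * s k ^ (m - 1)) = 0"
        by (rule sum.neutral) (metis lessThan_iff mult_zero_right sk)
      then have "lam * x i = 0" using form[OF that] by simp
      thus "x i = 0" using \<open>lam \<noteq> 0\<close> by simp
    qed
    have "(\<Sum>i<n. x i ^ 2) = 0" using xi by simp
    then show False using norm by simp
  qed
  show ?thesis
  proof (intro conjI impI allI)
    fix i assume "lam > 0" "i < n" "even i"
    then show "x i \<ge> 0" using nonneg[of i] by (simp add: zero_le_mult_iff)
  next
    assume "lam > 0"
    then show "x 0 > 0" using nonneg[of 0] x0 assms(1)
      by (cases "x 0 > 0") (auto simp: not_less mult_le_0_iff zero_le_mult_iff)
  next
    fix i assume "lam < 0" "i < n" "even i"
    then show "x i \<le> 0" using nonneg[of i] by (simp add: zero_le_mult_iff)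
  next
    assume "lam < 0"
    then show "x 0 < 0" using nonneg[of 0] x0 assms(1)
      by (cases "x 0 < 0") (auto simp: not_less mult_le_0_iff zero_le_mult_iff)
  qed
qed

end
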